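(* Let $n\ge 2$. If $M\in\mathcal{S}_n$ is a minimiser of $\lambda_{n-1}$ over $\mathcal{S}_n$, then the matrix obtained from $M$ by setting all of its diagonal entries to $0$ is also a minimiser of $\lambda_{n-1}$ over $\mathcal{S}_n$.
   Context: $\mathcal{S}_n$ is the set of $n\times n$ real symmetric matrices with all entries in $[0,1]$; $\lambda_k(M)$ is the $k$-th largest eigenvalue of $M$ counted with multiplicity. A minimiser of $\lambda_{n-1}$ over $\mathcal{S}_n$ is $M\in\mathcal{S}_n$ with $\lambda_{n-1}(M)\le\lambda_{n-1}(M')$ for all $M'\in\mathcal{S}_n$. *)

theory Defs
  imports "Jordan_Normal_Form.Char_Poly" "HOL-Library.Multiset"
begin

definition S_set :: "nat \<Rightarrow> real mat set" where
  "S_set n = {M. M \<in> carrier_mat n n \<and> transpose_mat M = M \<and>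
     (\<forall>i<n. \<forall>j<n. 0 \<le> M $$ (i,j) \<and> M $$ (i,j) \<le> 1)}"

text \<open>Eigenvalues (real roots of the characteristic polynomial, with multiplicity),
  in non-increasing order. For real symmetric matrices all eigenvalues are real,
  so this list has length n.\<close>
definition eigs_desc :: "real mat \<Rightarrow> real list" where
  "eigs_desc M = rev (sorted_list_of_multiset (proots (char_poly M)))"

definition lambda_k :: "nat \<Rightarrow> real mat \<Rightarrow> real" where
  "lambda_k k M = eigs_desc M ! (k - 1)"

definition is_minimiser :: "nat \<Rightarrow> real mat \<Rightarrow> bool" where
  "is_minimiser n M \<longleftrightarrow> M \<in> S_set n \<and>
     (\<forall>M' \<in> S_set n. lambda_k (n - 1) M \<le> lambda_k (n - 1) M')"

definition zero_diag :: "real mat \<Rightarrow> real mat" where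
  "zero_diag M = mat (dim_row M) (dim_col M) (\<lambda>(i,j). if i = j then 0 else M $$ (i,j))"

end

theory Submission
  imports Defs
begin


lemma real_sym_eigvec:
  fixes A :: "real mat"
  assumes A: "A \<in> carrier_mat n n" and sym: "transpose_mat A = A" and n: "n > 0"
  shows "\<exists>e v. v \<in> carrier_vec n \<and> v \<noteq> 0\<^sub>v n \<and> A *\<^sub>v v = e \<cdot>\<^sub>v v"
proof -
  let ?Ac = "map_mat complex_of_real A"
  have Ac: "?Ac \<in> carrier_mat n n" using A by auto
  have "degree (char_poly ?Ac) = n" using degree_monic_char_poly[OF Ac] by auto
  hence "\<not> constant (poly (char_poly ?Ac))" using n by (simp add: constant_degree)
  then obtain l where "poly (char_poly ?Ac) l = 0" using fundamental_theorem_of_algebra by blast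
  hence "eigenvalue ?Ac l" using eigenvalue_root_char_poly[OF Ac] by auto
  then obtain z where z: "z \<in> carrier_vec n" "z \<noteq> 0\<^sub>v n" "?Ac *\<^sub>v z = l \<cdot>\<^sub>v z"
    unfolding eigenvalue_def eigenvector_def using Ac by auto
  define x where "x = map_vec Re z"
  define y where "y = map_vec Im z"
  define a where "a = Re l" 
  define b where "b = Im l"
  have x: "x \<in> carrier_vec n" and y: "y \<in> carrier_vec n" using z(1) unfolding x_def y_def by auto
  have comp: "(?Ac *\<^sub>v z) $ i = (\<Sum>j\<in>{0..<n}. complex_of_real (A $$ (i,j)) * z $ j)
     \<and> (?Ac *\<^sub>v z) $ i = l * z $ i" if i: "i < n" for i
  proof
    show "(?Ac *\<^sub>v z) $ i = (\<Sum>j\<in>{0..<n}. complex_of_real (A $$ (i,j)) * z $ j)"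
      using i z(1) A by (auto simp: row_def scalar_prod_def)
    show "(?Ac *\<^sub>v z) $ i = l * z $ i" using z(3) i z(1) by simp
  qed
  have Ax: "A *\<^sub>v x = a \<cdot>\<^sub>v x - b \<cdot>\<^sub>v y"
  proof (rule eq_vecI)
    fix i assume i: "i < dim_vec (a \<cdot>\<^sub>v x - b \<cdot>\<^sub>v y)"
    hence i: "i < n" using y by simp
    have "Re (\<Sum>j\<in>{0..<n}. complex_of_real (A $$ (i,j)) * z $ j) = Re (l * z $ i)"
      using comp[OF i] by metis
    hence "(\<Sum>j\<in>{0..<n}. A $$ (i,j) * x $ j) = a * x $ i - b * y $ i"
      using i z(1) unfolding x_def y_def a_def b_def by (simp add: Re_sum)
    thus "(A *\<^sub>v x) $ i = (a \<cdot>\<^sub>v x - b \<cdot>\<^sub>v y) $ i"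
      using i x y A by (auto simp: row_def scalar_prod_def)
  qed (use x y A in auto)
  have Ay: "A *\<^sub>v y = b \<cdot>\<^sub>v x + a \<cdot>\<^sub>v y"
  proof (rule eq_vecI)
    fix i assume i: "i < dim_vec (b \<cdot>\<^sub>v x + a \<cdot>\<^sub>v y)"
    hence i: "i < n" using y by simp
    have "Im (\<Sum>j\<in>{0..<n}. complex_of_real (A $$ (i,j)) * z $ j) = Im (l * z $ i)"
      using comp[OF i] by metis
    hence "(\<Sum>j\<in>{0..<n}. A $$ (i,j) * y $ j) = b * x $ i + a * y $ i"
      using i z(1) unfolding x_def y_def a_def b_def by (simp add: Im_sum)
    thus "(A *\<^sub>v y) $ i = (b \<cdot>\<^sub>v x + a \<cdot>\<^sub>v y) $ i"
      using i x y A by (auto simp: row_def scalar_prod_def)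
  qed (use x y A in auto)
  have symm: "(A *\<^sub>v y) \<bullet> x = y \<bullet> (A *\<^sub>v x)"
    using transpose_vec_mult_scalar[OF A x y] sym by simp
  have "(A *\<^sub>v y) \<bullet> x = b * (x \<bullet> x) + a * (y \<bullet> x)"
    unfolding Ay using x y by (simp add: add_scalar_prod_distrib[of _ n] )
  moreover have "y \<bullet> (A *\<^sub>v x) = a * (y \<bullet> x) - b * (y \<bullet> y)"
    unfolding Ax using x y by (simp add: scalar_prod_minus_distrib[of _ n])
  ultimately have eq: "b * (x \<bullet> x + y \<bullet> y) = 0" using symm by (simp add: algebra_simps)
  have xx: "x \<bullet> x \<ge> 0" "y \<bullet> y \<ge> 0" unfolding scalar_prod_def by (auto intro: sum_nonneg)
  have "x \<noteq> 0\<^sub>v n \<or> y \<noteq> 0\<^sub>v n"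
  proof (rule ccontr)
    assume "\<not> ?thesis"
    hence "z = 0\<^sub>v n" using z(1) unfolding x_def y_def
      by (auto simp: vec_eq_iff complex_eq_iff)
    thus False using z(2) by simp
  qed
  hence "x \<bullet> x > 0 \<or> y \<bullet> y > 0"
    using conjugate_square_greater_0_vec[OF x] conjugate_square_greater_0_vec[OF y] by simp
  hence b0: "b = 0" using eq xx by (auto simp: add_pos_nonneg add_nonneg_pos)
  have Ax': "A *\<^sub>v x = a \<cdot>\<^sub>v x"
    by (rule eq_vecI) (use Ax b0 x y A in auto)
  have Ay': "A *\<^sub>v y = a \<cdot>\<^sub>v y"
    by (rule eq_vecI) (use Ay b0 x y A in auto)
  show ?thesis using Ax' Ay' x y \<open>x \<noteq> 0\<^sub>v n \<or> y \<noteq> 0\<^sub>v n\<close> by blast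
qed

lemma householder:
  fixes v :: "real vec"
  assumes v: "v \<in> carrier_vec n" and n: "n > 0" and unit: "v \<bullet> v = 1"
  shows "\<exists>H. H \<in> carrier_mat n n \<and> transpose_mat H = H \<and> H * H = 1\<^sub>m n \<and> H *\<^sub>v unit_vec n 0 = v"
proof -
  define w where "w = v - unit_vec n 0"
  have w: "w \<in> carrier_vec n" using v unfolding w_def by auto
  have wi: "w $ i = v $ i - (if i = 0 then 1 else 0)" if "i < n" for i
    using that v unfolding w_def by auto
  define s where "s = (\<Sum>k\<in>{0..<n}. w $ k * w $ k)"
  define c where "c = 2 / s"
  have cs: "c * (c * s) = 2 * c" unfolding c_def by (cases "s = 0") auto
  define H where "H = mat n n (\<lambda>(i,j). (if i = j then 1 else 0) - c * w $ i * w $ j)"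
  have H: "H \<in> carrier_mat n n" unfolding H_def by auto
  have HT: "transpose_mat H = H" unfolding H_def by (rule eq_matI) auto
  have HH: "H * H = 1\<^sub>m n"
  proof (rule eq_matI)
    fix i j assume ij: "i < dim_row (1\<^sub>m n)" "j < dim_col (1\<^sub>m n)"
    hence i: "i < n" and j: "j < n" by auto
    have "(H * H) $$ (i,j) = (\<Sum>k\<in>{0..<n}. ((if i = k then 1 else 0) - c * w $ i * w $ k) *
       ((if k = j then 1 else 0) - c * w $ k * w $ j))"
      using i j unfolding H_def by (auto simp: scalar_prod_def row_def col_def)
    also have "\<dots> = (\<Sum>k\<in>{0..<n}. (if k = i then (if i = j then 1 else 0) else 0) 
       - (if k = i then c * w $ k * w $ j else 0)
       - (if k = j then c * w $ i * w $ k else 0)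
       + c * c * w $ i * w $ j * (w $ k * w $ k))"
      by (rule sum.cong) (auto simp: algebra_simps)
    also have "\<dots> = (\<Sum>k\<in>{0..<n}. (if k = i then (if i = j then 1 else 0) else 0)) 
       - (\<Sum>k\<in>{0..<n}. (if k = i then c * w $ k * w $ j else 0))
       - (\<Sum>k\<in>{0..<n}. (if k = j then c * w $ i * w $ k else 0))
       + (\<Sum>k\<in>{0..<n}. c * c * w $ i * w $ j * (w $ k * w $ k))"
      by (simp only: sum.distrib sum_subtractf)
    also have "\<dots> = (if i = j then 1 else 0) - 2 * c * w $ i * w $ j + c * (c * s) * w $ i * w $ j"
      using i j unfolding s_def by (simp add: sum_distrib_left[symmetric] sum.delta')
    also have "\<dots> = 1\<^sub>m n $$ (i,j)" using i j cs by simp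
    finally show "(H * H) $$ (i,j) = 1\<^sub>m n $$ (i,j)" .
  qed (use H in auto)
  have He: "H *\<^sub>v unit_vec n 0 = v"
  proof (rule eq_vecI)
    fix i assume "i < dim_vec v" hence i: "i < n" using v by auto
    have "(H *\<^sub>v unit_vec n 0) $ i = (\<Sum>k\<in>{0..<n}. H $$ (i,k) * (if k = 0 then 1 else 0))"
      using i n H by (simp add: scalar_prod_def row_def unit_vec_def)
    also have "\<dots> = (\<Sum>k\<in>{0..<n}. if k = 0 then H $$ (i,k) else 0)"
      by (rule sum.cong) auto
    also have "\<dots> = H $$ (i,0)" using n by simp
    also have "\<dots> = v $ i"
    proof (cases "s = 0")
      case True
      hence "\<forall>k\<in>{0..<n}. w $ k * w $ k = 0" unfolding s_def
        by (subst (asm) sum_nonneg_eq_0_iff) auto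
      hence "w $ k = 0" if "k < n" for k using that by auto
      then show ?thesis using i n wi unfolding H_def by (auto simp: c_def)
    next
      case False
      have "s = (\<Sum>k\<in>{0..<n}. v $ k * v $ k + (if k = 0 then 1 - 2 * v $ 0 else 0))"
        unfolding s_def by (rule sum.cong) (auto simp: wi algebra_simps)
      also have "\<dots> = (\<Sum>k\<in>{0..<n}. v $ k * v $ k) - 2 * v $ 0 + 1"
        using n by (simp add: sum.distrib)
      also have "(\<Sum>k\<in>{0..<n}. v $ k * v $ k) = 1" using unit v by (simp add: scalar_prod_def)
      finally have "s = - 2 * w $ 0" using wi[OF n] by simp
      hence "c * w $ 0 = -1" using False unfolding c_def by (simp add: field_simps)
      moreover have "H $$ (i,0) = (if i = 0 then 1 else 0) - (c * w $ 0) * w $ i"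
        using i n unfolding H_def by (simp add: algebra_simps)
      ultimately show ?thesis using wi[OF i] by simp
    qed
    finally show "(H *\<^sub>v unit_vec n 0) $ i = v $ i" .
  qed (use H v in auto)
  show ?thesis using H HT HH He by blast
qed

definition diagm :: "real list \<Rightarrow> real mat" where
  "diagm es = mat (length es) (length es) (\<lambda>(i,j). if i = j then es ! i else 0)"

lemma diagm_carrier[simp]: "length es = n \<Longrightarrow> diagm es \<in> carrier_mat n n"
  unfolding diagm_def by auto

lemma diagm_dims[simp]: "dim_row (diagm es) = length es" "dim_col (diagm es) = length es"
  unfolding diagm_def by auto

lemma mat_unit_entry:
  fixes M :: "'a :: comm_ring_1 mat"
  assumes M: "M \<in> carrier_mat n n" and i: "i < n" and j: "j < n"
  shows "(M *\<^sub>v unit_vec n j) $ i = M $$ (i,j)"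
proof -
  have "(M *\<^sub>v unit_vec n j) $ i = (\<Sum>k\<in>{0..<n}. M $$ (i,k) * (if k = j then 1 else 0))"
    using i M by (simp add: scalar_prod_def row_def unit_vec_def)
  also have "\<dots> = (\<Sum>k\<in>{0..<n}. if k = j then M $$ (i,k) else 0)"
    by (rule sum.cong) auto
  also have "\<dots> = M $$ (i,j)" using j by simp
  finally show ?thesis .
qed

lemma assoc4:
  fixes X :: "'a :: comm_ring_1 mat"
  assumes "X \<in> carrier_mat n n" "Y \<in> carrier_mat n n" "Z \<in> carrier_mat n n" "W \<in> carrier_mat n n"
  shows "(X * Y) * (Z * W) = X * (Y * Z) * W"
  using assms by (simp add: assoc_mult_mat[of _ n n _ n _ n])

lemma assoc5:
  fixes X :: "'a :: comm_ring_1 mat"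
  assumes "X \<in> carrier_mat n n" "Y \<in> carrier_mat n n" "Z \<in> carrier_mat n n" "W \<in> carrier_mat n n"
  shows "X * Y * Z * W = X * (Y * Z * W)"
  using assms by (simp add: assoc_mult_mat[of _ n n _ n _ n])

lemma spectral:
  fixes A :: "real mat"
  assumes "A \<in> carrier_mat n n" "transpose_mat A = A"
  shows "\<exists>P es. P \<in> carrier_mat n n \<and> length es = n \<and> transpose_mat P * P = 1\<^sub>m n \<and>
     P * transpose_mat P = 1\<^sub>m n \<and> A = P * diagm es * transpose_mat P"
  using assms
proof (induction n arbitrary: A)
  case 0
  then show ?case by (intro exI[of _ "1\<^sub>m 0"] exI[of _ "[]"]) (auto intro!: eq_matI simp: diagm_def)
next
  case (Suc m)
  define n where "n = Suc m"
  have A: "A \<in> carrier_mat n n" and sym: "transpose_mat A = A" using Suc.prems n_def by auto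
  obtain e v0 where v0: "v0 \<in> carrier_vec n" "v0 \<noteq> 0\<^sub>v n" "A *\<^sub>v v0 = e \<cdot>\<^sub>v v0"
    using real_sym_eigvec[OF A sym] n_def by auto
  have pos: "v0 \<bullet> v0 > 0" using conjugate_square_greater_0_vec[OF v0(1)] v0(2) by simp
  define v where "v = (1 / sqrt (v0 \<bullet> v0)) \<cdot>\<^sub>v v0"
  have v: "v \<in> carrier_vec n" using v0 unfolding v_def by auto
  have vv: "v \<bullet> v = 1" unfolding v_def using v0(1) pos
    by (simp add: smult_scalar_prod_distrib[of _ n] scalar_prod_smult_distrib[of _ n]) 
  have Av: "A *\<^sub>v v = e \<cdot>\<^sub>v v" unfolding v_def using v0 A
    by (simp add: mult_mat_vec[OF A v0(1)] smult_smult_assoc mult.commute)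
  obtain H where H: "H \<in> carrier_mat n n" "transpose_mat H = H" "H * H = 1\<^sub>m n"
     "H *\<^sub>v unit_vec n 0 = v"
    using householder[OF v _ vv] n_def by auto
  define A' where "A' = H * A * H"
  have A': "A' \<in> carrier_mat n n" unfolding A'_def using H A by auto
  have e0: "unit_vec n 0 \<in> carrier_vec n" by simp
  have HA: "H * A \<in> carrier_mat n n" using H A by auto
  have A'sym: "transpose_mat A' = A'" unfolding A'_def
    using transpose_mult[OF HA H(1)] transpose_mult[OF H(1) A] H(2) sym assoc_mult_mat[OF H(1) A H(1)]
    by simp
  have "A' *\<^sub>v unit_vec n 0 = (H * A) *\<^sub>v (H *\<^sub>v unit_vec n 0)"
    unfolding A'_def using assoc_mult_mat_vec[OF HA H(1) e0] .
  also have "\<dots> = H *\<^sub>v (A *\<^sub>v (H *\<^sub>v unit_vec n 0))"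
    unfolding H(4) by (rule assoc_mult_mat_vec[OF H(1) A v])
  also have "\<dots> = e \<cdot>\<^sub>v (H *\<^sub>v (H *\<^sub>v unit_vec n 0))" using H(4) Av mult_mat_vec[OF H(1) v] by simp
  also have "H *\<^sub>v (H *\<^sub>v unit_vec n 0) = unit_vec n 0"
    using H(3) assoc_mult_mat_vec[OF H(1) H(1) e0, symmetric] by simp
  finally have col0: "A' *\<^sub>v unit_vec n 0 = e \<cdot>\<^sub>v unit_vec n 0" .
  have A'i0: "A' $$ (i,0) = (if i = 0 then e else 0)" if "i < n" for i
    using mat_unit_entry[OF A' that, of 0] col0 that n_def by (cases "i = 0") auto
  have A'0j: "A' $$ (0,j) = (if j = 0 then e else 0)" if "j < n" for j
  proof -
    have "A' $$ (0,j) = transpose_mat A' $$ (j,0)" using A' that n_def by simp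
    thus ?thesis using A'sym A'i0[OF that] by simp
  qed
  define A3 where "A3 = mat m m (\<lambda>(i,j). A' $$ (Suc i, Suc j))"
  have A3: "A3 \<in> carrier_mat m m" unfolding A3_def by simp
  have A3sym: "transpose_mat A3 = A3"
  proof (rule eq_matI)
    fix i j assume "i < dim_row A3" "j < dim_col A3"
    hence ij: "i < m" "j < m" unfolding A3_def by auto
    have "A' $$ (Suc j, Suc i) = transpose_mat A' $$ (Suc i, Suc j)" using A' ij n_def by simp
    thus "transpose_mat A3 $$ (i,j) = A3 $$ (i,j)" using ij A'sym unfolding A3_def by simp
  qed (auto simp: A3_def)
  obtain P3 es3 where P3: "P3 \<in> carrier_mat m m" "length es3 = m" "transpose_mat P3 * P3 = 1\<^sub>m m"
     "P3 * transpose_mat P3 = 1\<^sub>m m" "A3 = P3 * diagm es3 * transpose_mat P3"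
    using Suc.IH[OF A3 A3sym] by blast
  define E where "E = mat 1 1 (\<lambda>_. e)"
  have E: "E \<in> carrier_mat 1 1" unfolding E_def by simp
  define P' where "P' = four_block_mat (1\<^sub>m 1) (0\<^sub>m 1 m) (0\<^sub>m m 1) P3"
  have P': "P' \<in> carrier_mat n n" unfolding P'_def n_def using P3 by auto
  have P'T: "transpose_mat P' = four_block_mat (1\<^sub>m 1) (0\<^sub>m 1 m) (0\<^sub>m m 1) (transpose_mat P3)"
    unfolding P'_def using P3 by (subst transpose_four_block_mat[of _ 1 1 _ m _ m]) auto
  have A'block: "A' = four_block_mat E (0\<^sub>m 1 m) (0\<^sub>m m 1) A3"
  proof (rule eq_matI)
    fix i j assume "i < dim_row (four_block_mat E (0\<^sub>m 1 m) (0\<^sub>m m 1) A3)"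
      "j < dim_col (four_block_mat E (0\<^sub>m 1 m) (0\<^sub>m m 1) A3)"
    hence ij: "i < n" "j < n" using E A3 n_def by auto
    show "A' $$ (i,j) = four_block_mat E (0\<^sub>m 1 m) (0\<^sub>m m 1) A3 $$ (i,j)"
    proof (cases "i = 0 \<or> j = 0")
      case True thus ?thesis using ij A'i0 A'0j E A3 n_def by (auto simp: E_def)
    next
      case False
      then obtain i' j' where "i = Suc i'" "j = Suc j'" by (cases i; cases j) auto
      thus ?thesis using ij E A3 n_def by (auto simp: A3_def)
    qed
  qed (use A' E A3 n_def in auto)
  have Dblock: "diagm (e # es3) = four_block_mat E (0\<^sub>m 1 m) (0\<^sub>m m 1) (diagm es3)"
  proof (rule eq_matI)
    fix i j assume "i < dim_row (four_block_mat E (0\<^sub>m 1 m) (0\<^sub>m m 1) (diagm es3))"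
      "j < dim_col (four_block_mat E (0\<^sub>m 1 m) (0\<^sub>m m 1) (diagm es3))"
    hence ij: "i < n" "j < n" using E P3 n_def by auto
    show "diagm (e # es3) $$ (i,j) = four_block_mat E (0\<^sub>m 1 m) (0\<^sub>m m 1) (diagm es3) $$ (i,j)"
    proof (cases "i = 0 \<or> j = 0")
      case True thus ?thesis using ij E P3 n_def by (auto simp: E_def diagm_def)
    next
      case False
      then obtain i' j' where "i = Suc i'" "j = Suc j'" by (cases i; cases j) auto
      thus ?thesis using ij E P3 n_def by (auto simp: diagm_def)
    qed
  qed (use E P3 n_def in \<open>auto simp: diagm_def\<close>)
  have D3: "diagm es3 \<in> carrier_mat m m" using P3(2) by simp
  have one_block: "four_block_mat (1\<^sub>m 1) (0\<^sub>m 1 m) (0\<^sub>m m 1) (1\<^sub>m m) = 1\<^sub>m n"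
    unfolding n_def by (rule eq_matI) auto
  have P'TP': "transpose_mat P' * P' = 1\<^sub>m n"
    unfolding P'T unfolding P'_def using P3
    by (subst mult_four_block_mat[of _ 1 1 _ m _ m _ _ 1 _ m]) (auto simp: one_block[unfolded n_def] n_def)
  have P'P'T: "P' * transpose_mat P' = 1\<^sub>m n"
    unfolding P'T unfolding P'_def using P3
    by (subst mult_four_block_mat[of _ 1 1 _ m _ m _ _ 1 _ m]) (auto simp: one_block[unfolded n_def] n_def)
  have PD: "P' * diagm (e # es3) = four_block_mat E (0\<^sub>m 1 m) (0\<^sub>m m 1) (P3 * diagm es3)"
    unfolding Dblock unfolding P'_def using P3 E D3
    by (subst mult_four_block_mat[of _ 1 1 _ m _ m _ _ 1 _ m]) auto
  have P3D3: "P3 * diagm es3 \<in> carrier_mat m m" using P3 D3 by auto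
  have "P' * diagm (e # es3) * transpose_mat P' = four_block_mat E (0\<^sub>m 1 m) (0\<^sub>m m 1) (P3 * diagm es3)
     * four_block_mat (1\<^sub>m 1) (0\<^sub>m 1 m) (0\<^sub>m m 1) (transpose_mat P3)"
    unfolding PD P'T ..
  also have "\<dots> = four_block_mat E (0\<^sub>m 1 m) (0\<^sub>m m 1) (P3 * diagm es3 * transpose_mat P3)"
    using P3 E P3D3
    by (subst mult_four_block_mat[of _ 1 1 _ m _ m _ _ 1 _ m]) auto
  finally have "P' * diagm (e # es3) * transpose_mat P' = four_block_mat E (0\<^sub>m 1 m) (0\<^sub>m m 1) (P3 * diagm es3 * transpose_mat P3)" .
  hence PDP: "P' * diagm (e # es3) * transpose_mat P' = A'" using A'block P3 by simp
  define P where "P = H * P'"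
  have P: "P \<in> carrier_mat n n" unfolding P_def using H P' by auto
  have PT: "transpose_mat P = transpose_mat P' * H" unfolding P_def using H P'
    by (simp add: transpose_mult[of _ n n])
  have D: "diagm (e # es3) \<in> carrier_mat n n" using P3 n_def by simp
  have PTd: "transpose_mat (H * P') = transpose_mat P' * H" using PT unfolding P_def .
  have P'T: "transpose_mat P' \<in> carrier_mat n n" using P' by simp
  have "transpose_mat P * P = transpose_mat P' * (H * H) * P'"
    unfolding P_def PTd by (rule assoc4[OF P'T H(1) H(1) P'])
  hence 1: "transpose_mat P * P = 1\<^sub>m n" using H P' P'TP' by simp
  have "P * transpose_mat P = H * (P' * transpose_mat P') * H"
    unfolding P_def PTd by (rule assoc4[OF H(1) P' P'T H(1)])
  hence 2: "P * transpose_mat P = 1\<^sub>m n" using H P' P'P'T by simp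
  have "P * diagm (e # es3) * transpose_mat P = H * P' * diagm (e # es3) * (transpose_mat P' * H)"
    unfolding P_def PTd ..
  also have "\<dots> = H * (P' * diagm (e # es3) * transpose_mat P') * H"
    using H P' D P'T by (simp add: assoc_mult_mat[of _ n n _ n _ n])
  also have "\<dots> = (H * H) * A * (H * H)" unfolding PDP A'_def using H(1) A
    by (simp add: assoc_mult_mat[of _ n n _ n _ n])
  also have "\<dots> = A" using H A by simp
  finally have 3: "A = P * diagm (e # es3) * transpose_mat P" ..
  show ?case using P 1 2 3 P3(2) unfolding n_def by (intro exI[of _ P] exI[of _ "e # es3"]) auto
qed

lemma proots_prod_lin: "proots (\<Prod>a\<leftarrow>es. [:- a, 1:]) = mset (es :: real list)"
proof (induction es)
  case Nil then show ?case by simp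
next
  case (Cons a es)
  have nz: "(\<Prod>a\<leftarrow>es. [:- a, 1:]) \<noteq> (0 :: real poly)"
    by (auto simp: prod_list_zero_iff)
  have "proots (\<Prod>a\<leftarrow>a # es. [:- a, 1:]) = proots [:- a, 1:] + proots (\<Prod>a\<leftarrow>es. [:- a, 1:])"
    unfolding list.map prod_list.Cons by (rule proots_mult[OF _ nz]) simp
  also have "proots [:- a, 1:] = {#a#}" using proots_linear_factor[of "-a"] by simp
  finally show ?case using Cons by simp
qed

lemma eigs_desc_spectral:
  fixes A P :: "real mat"
  assumes A: "A \<in> carrier_mat n n" and P: "P \<in> carrier_mat n n" and len: "length es = n"
    and PP: "transpose_mat P * P = 1\<^sub>m n" "P * transpose_mat P = 1\<^sub>m n"
    and AP: "A = P * diagm es * transpose_mat P"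
  shows "eigs_desc A = rev (sort es)"
proof -
  have D: "diagm es \<in> carrier_mat n n" using len by simp
  have "similar_mat_wit A (diagm es) P (transpose_mat P)"
    unfolding similar_mat_wit_def Let_def using A P D PP AP by auto
  hence "similar_mat A (diagm es)" unfolding similar_mat_def by blast
  hence "char_poly A = char_poly (diagm es)" by (rule char_poly_similar)
  also have "\<dots> = (\<Prod>a\<leftarrow>diag_mat (diagm es). [:- a, 1:])"
    by (rule char_poly_upper_triangular[OF D]) (auto simp: upper_triangular_def diagm_def)
  also have "diag_mat (diagm es) = es"
    by (rule nth_equalityI) (auto simp: diag_mat_def diagm_def)
  finally have "proots (char_poly A) = mset es" using proots_prod_lin by simp
  thus ?thesis unfolding eigs_desc_def by (simp add: sorted_list_of_multiset_mset)
qed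

lemma lambda_spectral:
  fixes A P :: "real mat"
  assumes A: "A \<in> carrier_mat n n" and P: "P \<in> carrier_mat n n" and len: "length es = n"
    and PP: "transpose_mat P * P = 1\<^sub>m n" "P * transpose_mat P = 1\<^sub>m n"
    and AP: "A = P * diagm es * transpose_mat P" and n: "n \<ge> 2"
  shows "lambda_k (n - 1) A = sort es ! 1"
proof -
  have "lambda_k (n - 1) A = rev (sort es) ! (n - 2)"
    unfolding lambda_k_def eigs_desc_spectral[OF assms(1-6)] by (simp add: numeral_2_eq_2)
  also have "\<dots> = sort es ! (length (sort es) - Suc (n - 2))"
    by (rule rev_nth) (use len n in simp)
  also have "length (sort es) - Suc (n - 2) = 1" using len n by simp
  finally show ?thesis .
qed

lemma sort_second_le:
  fixes xs :: "real list"
  assumes "length xs \<ge> 2"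
  shows "sort xs ! 1 \<le> t \<longleftrightarrow> 2 \<le> card {i. i < length xs \<and> xs ! i \<le> t}"
proof -
  let ?s = "sort xs"
  have "card {i. i < length xs \<and> xs ! i \<le> t} = length (filter (\<lambda>x. x \<le> t) xs)"
    by (simp add: length_filter_conv_card)
  also have "\<dots> = length (filter (\<lambda>x. x \<le> t) ?s)"
    by (metis mset_filter mset_sort size_mset)
  also have "\<dots> = card {i. i < length ?s \<and> ?s ! i \<le> t}"
    by (simp add: length_filter_conv_card)
  finally have c: "card {i. i < length xs \<and> xs ! i \<le> t} = card {i. i < length ?s \<and> ?s ! i \<le> t}" .
  have ls: "length ?s \<ge> 2" using assms by simp
  have sorted: "sorted ?s" by simp
  show ?thesis unfolding c
  proof
    assume le: "?s ! 1 \<le> t"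
    have "?s ! 0 \<le> ?s ! 1" using sorted_nth_mono[OF sorted, of 0 1] ls by simp
    hence "{0, 1} \<subseteq> {i. i < length ?s \<and> ?s ! i \<le> t}" using le ls by auto
    moreover have "finite {i. i < length ?s \<and> ?s ! i \<le> t}" by simp
    ultimately have "card {0::nat, 1} \<le> card {i. i < length ?s \<and> ?s ! i \<le> t}"
      by (rule card_mono[rotated])
    thus "2 \<le> card {i. i < length ?s \<and> ?s ! i \<le> t}" by simp
  next
    assume c2: "2 \<le> card {i. i < length ?s \<and> ?s ! i \<le> t}"
    show "?s ! 1 \<le> t"
    proof (rule ccontr)
      assume "\<not> ?s ! 1 \<le> t"
      hence gt: "?s ! i > t" if "1 \<le> i" "i < length ?s" for i
        using sorted_nth_mono[OF sorted that] by simp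
      have "{i. i < length ?s \<and> ?s ! i \<le> t} \<subseteq> {0}"
      proof
        fix i assume "i \<in> {i. i < length ?s \<and> ?s ! i \<le> t}"
        thus "i \<in> {0}" using gt[of i] by (cases i) auto
      qed
      hence "card {i. i < length ?s \<and> ?s ! i \<le> t} \<le> card {0::nat}"
        by (rule card_mono[rotated]) simp
      thus False using c2 by simp
    qed
  qed
qed

lemma qf_spectral:
  fixes A P :: "real mat"
  assumes P: "P \<in> carrier_mat n n" and len: "length es = n"
    and PP: "P * transpose_mat P = 1\<^sub>m n"
    and AP: "A = P * diagm es * transpose_mat P" and x: "x \<in> carrier_vec n"
  shows "x \<bullet> (A *\<^sub>v x) = (\<Sum>l\<in>{0..<n}. es ! l * ((transpose_mat P *\<^sub>v x) $ l)^2)"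
    and "x \<bullet> x = (\<Sum>l\<in>{0..<n}. ((transpose_mat P *\<^sub>v x) $ l)^2)"
proof -
  define y where "y = transpose_mat P *\<^sub>v x"
  have PT: "transpose_mat P \<in> carrier_mat n n" using P by simp
  have D: "diagm es \<in> carrier_mat n n" using len by simp
  have y: "y \<in> carrier_vec n" unfolding y_def using PT x by simp
  have Dy: "diagm es *\<^sub>v y \<in> carrier_vec n" using D y by simp
  have "A *\<^sub>v x = P *\<^sub>v (diagm es *\<^sub>v y)" unfolding AP y_def
    using P D PT x by (simp add: assoc_mult_mat_vec[of _ n n _ n])
  hence "x \<bullet> (A *\<^sub>v x) = y \<bullet> (diagm es *\<^sub>v y)"
    using transpose_vec_mult_scalar[OF P Dy x] unfolding y_def by simp
  also have "\<dots> = (\<Sum>l\<in>{0..<n}. y $ l * (\<Sum>k\<in>{0..<n}. (if l = k then es ! l else 0) * y $ k))"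
    using y len by (simp add: scalar_prod_def diagm_def row_def)
  also have "\<dots> = (\<Sum>l\<in>{0..<n}. es ! l * (y $ l)^2)"
  proof (rule sum.cong[OF refl])
    fix l assume "l \<in> {0..<n}"
    have "(\<Sum>k\<in>{0..<n}. (if l = k then es ! l else 0) * y $ k) = (\<Sum>k\<in>{0..<n}. if k = l then es ! l * y $ k else 0)"
      by (rule sum.cong) auto
    also have "\<dots> = es ! l * y $ l" using \<open>l \<in> {0..<n}\<close> by simp
    finally show "y $ l * (\<Sum>k\<in>{0..<n}. (if l = k then es ! l else 0) * y $ k) = es ! l * (y $ l)^2"
      by (simp add: power2_eq_square)
  qed
  finally show "x \<bullet> (A *\<^sub>v x) = (\<Sum>l\<in>{0..<n}. es ! l * ((transpose_mat P *\<^sub>v x) $ l)^2)"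
    unfolding y_def .
  have "x = P *\<^sub>v y" unfolding y_def using assoc_mult_mat_vec[OF P PT x] PP x by simp
  hence "x \<bullet> x = x \<bullet> (P *\<^sub>v y)" by simp
  also have "\<dots> = y \<bullet> y" using transpose_vec_mult_scalar[OF P y x] unfolding y_def by simp
  also have "\<dots> = (\<Sum>l\<in>{0..<n}. (y $ l)^2)" using y by (simp add: scalar_prod_def power2_eq_square)
  finally show "x \<bullet> x = (\<Sum>l\<in>{0..<n}. ((transpose_mat P *\<^sub>v x) $ l)^2)" unfolding y_def .
qed

lemma zero_diag_qf:
  fixes M :: "real mat"
  assumes M: "M \<in> carrier_mat n n" and diag: "\<And>i. i < n \<Longrightarrow> M $$ (i,i) \<ge> 0"
    and x: "x \<in> carrier_vec n"
  shows "x \<bullet> (zero_diag M *\<^sub>v x) \<le> x \<bullet> (M *\<^sub>v x)"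
proof -
  have Z: "zero_diag M \<in> carrier_mat n n" using M unfolding zero_diag_def by auto
  have e1: "x \<bullet> (M *\<^sub>v x) = (\<Sum>i\<in>{0..<n}. (\<Sum>j\<in>{0..<n}. x $ i * M $$ (i,j) * x $ j))"
    using M x by (simp add: scalar_prod_def row_def sum_distrib_left algebra_simps)
  have e2: "x \<bullet> (zero_diag M *\<^sub>v x) = (\<Sum>i\<in>{0..<n}. (\<Sum>j\<in>{0..<n}. x $ i * zero_diag M $$ (i,j) * x $ j))"
    using Z x by (simp add: scalar_prod_def row_def sum_distrib_left algebra_simps)
  have "(\<Sum>i\<in>{0..<n}. (\<Sum>j\<in>{0..<n}. x $ i * M $$ (i,j) * x $ j)) =
    (\<Sum>i\<in>{0..<n}. (\<Sum>j\<in>{0..<n}. x $ i * zero_diag M $$ (i,j) * x $ j + (if j = i then x $ i * M $$ (i,i) * x $ i else 0)))"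
    using M by (intro sum.cong refl) (auto simp: zero_diag_def)
  also have "\<dots> = (\<Sum>i\<in>{0..<n}. (\<Sum>j\<in>{0..<n}. x $ i * zero_diag M $$ (i,j) * x $ j)) + (\<Sum>i\<in>{0..<n}. x $ i * M $$ (i,i) * x $ i)"
    by (simp add: sum.distrib)
  finally have "x \<bullet> (M *\<^sub>v x) = x \<bullet> (zero_diag M *\<^sub>v x) + (\<Sum>i\<in>{0..<n}. M $$ (i,i) * (x $ i * x $ i))"
    using e1 e2 by (simp add: algebra_simps)
  moreover have "(\<Sum>i\<in>{0..<n}. M $$ (i,i) * (x $ i * x $ i)) \<ge> 0"
    using diag by (intro sum_nonneg) auto
  ultimately show ?thesis by simp
qed

lemma two_elems:
  assumes "2 \<le> card S"
  obtains i j where "i \<in> S" "j \<in> S" "i \<noteq> j"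
proof -
  have fin: "finite S" using assms by (metis card.infinite not_numeral_le_zero)
  obtain i where i: "i \<in> S" using assms by fastforce
  have "card (S - {i}) \<ge> 1" using assms i fin by (simp add: card_Diff_singleton)
  hence "S - {i} \<noteq> {}" by (metis card.empty not_one_le_zero)
  then obtain j where "j \<in> S - {i}" by blast
  thus ?thesis using i that by blast
qed

lemma main_ineq:
  fixes M :: "real mat"
  assumes MS: "M \<in> S_set n" and n: "n \<ge> 2"
  shows "lambda_k (n - 1) (zero_diag M) \<le> lambda_k (n - 1) M"
proof -
  have M: "M \<in> carrier_mat n n" and Msym: "transpose_mat M = M"
    and Ment: "\<And>i j. i < n \<Longrightarrow> j < n \<Longrightarrow> 0 \<le> M $$ (i,j)"
    using MS unfolding S_set_def by auto
  define Z where "Z = zero_diag M"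
  have Z: "Z \<in> carrier_mat n n" using M unfolding Z_def zero_diag_def by auto
  have Zsym: "transpose_mat Z = Z"
  proof (rule eq_matI)
    fix i j assume "i < dim_row Z" "j < dim_col Z"
    hence ij: "i < n" "j < n" using Z by auto
    have "M $$ (j,i) = transpose_mat M $$ (i,j)" using M ij by simp
    thus "transpose_mat Z $$ (i,j) = Z $$ (i,j)" using ij M Msym unfolding Z_def zero_diag_def by auto
  qed (use Z in auto)
  obtain P es where P: "P \<in> carrier_mat n n" "length es = n" "transpose_mat P * P = 1\<^sub>m n"
     "P * transpose_mat P = 1\<^sub>m n" "M = P * diagm es * transpose_mat P"
    using spectral[OF M Msym] by blast
  obtain Q fs where Q: "Q \<in> carrier_mat n n" "length fs = n" "transpose_mat Q * Q = 1\<^sub>m n"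
     "Q * transpose_mat Q = 1\<^sub>m n" "Z = Q * diagm fs * transpose_mat Q"
    using spectral[OF Z Zsym] by blast
  define t where "t = sort es ! 1"
  have lamM: "lambda_k (n - 1) M = t" unfolding t_def by (rule lambda_spectral[OF M P n])
  have lamZ: "lambda_k (n - 1) Z = sort fs ! 1" by (rule lambda_spectral[OF Z Q n])
  have "2 \<le> card {i. i < length es \<and> es ! i \<le> t}"
    using sort_second_le[of es t] P(2) n unfolding t_def by simp
  then obtain i j where ij: "i < n" "j < n" "i \<noteq> j" "es ! i \<le> t" "es ! j \<le> t"
    using P(2) by (auto elim!: two_elems)
  have "2 \<le> card {l. l < length fs \<and> fs ! l \<le> t}"
  proof (rule ccontr)
    assume "\<not> ?thesis"
    hence cle: "card {l. l < n \<and> fs ! l \<le> t} \<le> 1" using Q(2) by simp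
    obtain k0 where k0: "\<And>l. l < n \<Longrightarrow> fs ! l \<le> t \<Longrightarrow> l = k0"
    proof (cases "card {l. l < n \<and> fs ! l \<le> t} = 0")
      case True
      hence "{l. l < n \<and> fs ! l \<le> t} = {}" by simp
      thus ?thesis using that by blast
    next
      case False
      hence "card {l. l < n \<and> fs ! l \<le> t} = 1" using cle by linarith
      then obtain k where "{l. l < n \<and> fs ! l \<le> t} = {k}" by (rule card_1_singletonE)
      thus ?thesis using that by blast
    qed
    let ?ei = "unit_vec n i :: real vec"
    let ?ej = "unit_vec n j :: real vec"
    have PT: "transpose_mat P \<in> carrier_mat n n" and QT: "transpose_mat Q \<in> carrier_mat n n"
      using P Q by auto
    define \<alpha> where "\<alpha> = (transpose_mat Q *\<^sub>v (P *\<^sub>v ?ei)) $ k0"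
    define \<beta> where "\<beta> = (transpose_mat Q *\<^sub>v (P *\<^sub>v ?ej)) $ k0"
    obtain a b :: real where ab: "a \<noteq> 0 \<or> b \<noteq> 0" "a * \<alpha> + b * \<beta> = 0"
    proof (cases "\<alpha> = 0 \<and> \<beta> = 0")
      case True thus ?thesis using that[of 1 0] by simp
    next
      case False thus ?thesis using that[of \<beta> "- \<alpha>"] by (auto simp: algebra_simps)
    qed
    define y where "y = a \<cdot>\<^sub>v ?ei + b \<cdot>\<^sub>v ?ej"
    have y: "y \<in> carrier_vec n" unfolding y_def by simp
    have yl: "y $ l = (if l = i then a else 0) + (if l = j then b else 0)" if "l < n" for l
      using that ij unfolding y_def by simp
    define x where "x = P *\<^sub>v y"
    have x: "x \<in> carrier_vec n" unfolding x_def using P y by simp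
    have PTx: "transpose_mat P *\<^sub>v x = y"
      unfolding x_def using assoc_mult_mat_vec[OF PT P(1) y, symmetric] P(3) y by simp
    have "transpose_mat Q *\<^sub>v x = a \<cdot>\<^sub>v (transpose_mat Q *\<^sub>v (P *\<^sub>v ?ei)) + b \<cdot>\<^sub>v (transpose_mat Q *\<^sub>v (P *\<^sub>v ?ej))"
      unfolding x_def y_def using P(1) QT
      by (simp add: mult_add_distrib_mat_vec[of _ n n] mult_mat_vec[of _ n n])
    hence QTx0: "(transpose_mat Q *\<^sub>v x) $ k0 = 0" if "k0 < n"
      using ab(2) that P(1) QT unfolding \<alpha>_def \<beta>_def by simp
    have xx: "x \<bullet> x = (\<Sum>l\<in>{0..<n}. (y $ l)^2)"
      using qf_spectral(2)[OF P(1) P(2) P(4) P(5) x] PTx by simp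
    have "(\<Sum>l\<in>{0..<n}. (y $ l)^2) > 0"
    proof (cases "a \<noteq> 0")
      case True
      show ?thesis by (rule sum_pos2[of _ i]) (use True ij yl in auto)
    next
      case False
      hence "b \<noteq> 0" using ab by simp
      show ?thesis by (rule sum_pos2[of _ j]) (use \<open>b \<noteq> 0\<close> ij yl in auto)
    qed
    hence xpos: "x \<bullet> x > 0" using xx by simp
    have "x \<bullet> (M *\<^sub>v x) = (\<Sum>l\<in>{0..<n}. es ! l * (y $ l)^2)"
      using qf_spectral(1)[OF P(1) P(2) P(4) P(5) x] PTx by simp
    also have "\<dots> \<le> (\<Sum>l\<in>{0..<n}. t * (y $ l)^2)"
    proof (rule sum_mono)
      fix l assume l: "l \<in> {0..<n}"
      show "es ! l * (y $ l)^2 \<le> t * (y $ l)^2"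
      proof (cases "y $ l = 0")
        case False
        hence "l = i \<or> l = j" using yl[of l] l by (auto split: if_splits)
        hence "es ! l \<le> t" using ij by auto
        thus ?thesis by (intro mult_right_mono) auto
      qed simp
    qed
    also have "\<dots> = t * (x \<bullet> x)" unfolding xx by (simp add: sum_distrib_left)
    finally have Mle: "x \<bullet> (M *\<^sub>v x) \<le> t * (x \<bullet> x)" .
    define z where "z = transpose_mat Q *\<^sub>v x"
    have xxz: "x \<bullet> x = (\<Sum>l\<in>{0..<n}. (z $ l)^2)"
      using qf_spectral(2)[OF Q(1) Q(2) Q(4) Q(5) x] unfolding z_def by simp
    have "\<exists>l0<n. z $ l0 \<noteq> 0"
    proof (rule ccontr)
      assume "\<not> (\<exists>l0<n. z $ l0 \<noteq> 0)"
      hence "\<forall>l\<in>{0..<n}. z $ l = 0" by auto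
      hence "x \<bullet> x = 0" unfolding xxz by simp
      thus False using xpos by simp
    qed
    then obtain l0 where l0: "l0 < n" "z $ l0 \<noteq> 0" by blast
    have fsgt: "fs ! l > t" if "l < n" "z $ l \<noteq> 0" for l
    proof (rule ccontr)
      assume "\<not> fs ! l > t"
      hence "l = k0" using k0 that by simp
      thus False using QTx0 that unfolding z_def by simp
    qed
    have "(\<Sum>l\<in>{0..<n}. (fs ! l - t) * (z $ l)^2) > 0"
    proof (rule sum_pos2[of _ l0])
      show "0 < (fs ! l0 - t) * (z $ l0)^2" using fsgt[OF l0] l0 by simp
      fix l assume "l \<in> {0..<n}"
      thus "0 \<le> (fs ! l - t) * (z $ l)^2" using fsgt[of l] by (cases "z $ l = 0") auto
    qed (use l0 in auto)
    hence "(\<Sum>l\<in>{0..<n}. fs ! l * (z $ l)^2) > t * (x \<bullet> x)"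
      unfolding xxz by (simp add: algebra_simps sum_subtractf sum_distrib_left)
    moreover have "x \<bullet> (Z *\<^sub>v x) = (\<Sum>l\<in>{0..<n}. fs ! l * (z $ l)^2)"
      using qf_spectral(1)[OF Q(1) Q(2) Q(4) Q(5) x] unfolding z_def by simp
    moreover have "x \<bullet> (Z *\<^sub>v x) \<le> x \<bullet> (M *\<^sub>v x)"
      unfolding Z_def by (rule zero_diag_qf[OF M _ x]) (use Ment in auto)
    ultimately show False using Mle by simp
  qed
  hence "sort fs ! 1 \<le> t" using sort_second_le[of fs t] Q(2) n by simp
  thus ?thesis using lamM lamZ unfolding Z_def by simp
qed

theorem lemma4p10:
  fixes n :: nat and M :: "real mat"
  assumes "n \<ge> 2"
    and "is_minimiser n M"
  shows "is_minimiser n (zero_diag M)"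
proof -
  have MS: "M \<in> S_set n" and minM: "\<forall>M'\<in>S_set n. lambda_k (n - 1) M \<le> lambda_k (n - 1) M'"
    using assms(2) unfolding is_minimiser_def by auto
  have M: "M \<in> carrier_mat n n" and Msym: "transpose_mat M = M"
    and Ment: "\<And>i j. i < n \<Longrightarrow> j < n \<Longrightarrow> 0 \<le> M $$ (i,j) \<and> M $$ (i,j) \<le> 1"
    using MS unfolding S_set_def by auto
  have ZS: "zero_diag M \<in> S_set n"
  proof -
    have Z: "zero_diag M \<in> carrier_mat n n" using M unfolding zero_diag_def by auto
    have Zsym: "transpose_mat (zero_diag M) = zero_diag M"
    proof (rule eq_matI)
      fix i j assume "i < dim_row (zero_diag M)" "j < dim_col (zero_diag M)"
      hence ij: "i < n" "j < n" using Z by auto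
      have "M $$ (j,i) = transpose_mat M $$ (i,j)" using M ij by simp
      thus "transpose_mat (zero_diag M) $$ (i,j) = zero_diag M $$ (i,j)"
        using ij M Msym unfolding zero_diag_def by auto
    qed (use Z in auto)
    have "\<forall>i<n. \<forall>j<n. 0 \<le> zero_diag M $$ (i,j) \<and> zero_diag M $$ (i,j) \<le> 1"
      using M Ment unfolding zero_diag_def by auto
    thus ?thesis using Z Zsym unfolding S_set_def by auto
  qed
  have "lambda_k (n - 1) (zero_diag M) \<le> lambda_k (n - 1) M" by (rule main_ineq[OF MS assms(1)])
  thus ?thesis using ZS minM unfolding is_minimiser_def by force
qed

end
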